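(* Let $\Sigma=\Sigma_c\,\dot\cup\,\Sigma_{uc}=\Sigma_o\,\dot\cup\,\Sigma_{uo}$ be a finite alphabet, and let $\mathbf{G}=\mathop{\|}_{k\in[1,N]}\mathbf{G}_k$ be the plant, with $L(\mathbf G)$ and $L_m(\mathbf G)$ its closed and marked behaviors. Let the specification be $E=\mathop{\|}_{p\in\mathcal P}E_p$ with $E_p\subseteq\Sigma_{e,p}^*$ and $\Sigma_e=\bigcup_{p}\Sigma_{e,p}$, and let $P_e:\Sigma^*\to\Sigma_e^*$ be the natural projection. For each $p\in\mathcal P$, let $\mathbf G_p=\|\{\mathbf G_k: \Sigma_k\cap\Sigma_{e,p}\neq\emptyset\}$ have alphabet $\Sigma_p\supseteq\Sigma_{e,p}$, and let $P_p:\Sigma^*\to\Sigma_p^*$ be the natural projection. Assume every component is relevant to some specification, so that $$L(\mathbf G)=\bigcap_{p}P_p^{-1}L(\mathbf G_p),\qquad L_m(\mathbf G)=\bigcap_p P_p^{-1}L_m(\mathbf G_p).$$ Assume the following. (H1) For each $p\in\mathcal P$ there is a generator $\mathbf{SUP}_p$ over $\Sigma_p$ (a partial-observation decentralized supervisor) with $$L_m(\mathbf G_p)\cap L_m(\mathbf{SUP}_p)=K_p,\qquad L(\mathbf G_p)\cap L(\mathbf{SUP}_p)=\overline{K_p},$$ where $K_p=\sup\mathcal{CO}(E_p\,\|\,L_m(\mathbf G_p))\subseteq E_p\,\|\,L_m(\mathbf G_p)$. (H2) There are generators $\mathbf{CO}_q$ over alphabets $\Sigma_q\subseteq\Sigma$,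 $q\in\mathcal Q$ (partial-observation coordinators), with natural projections $P_q:\Sigma^*\to\Sigma_q^*$. Define $$L_m(\mathbf{SYS})=L_m(\mathbf G)\cap\bigcap_p P_p^{-1}L_m(\mathbf{SUP}_p)\cap\bigcap_q P_q^{-1}L_m(\mathbf{CO}_q),$$ $$L(\mathbf{SYS})=L(\mathbf G)\cap\bigcap_p P_p^{-1}L(\mathbf{SUP}_p)\cap\bigcap_q P_q^{-1}L(\mathbf{CO}_q).$$ Assume these are nonblocking, i.e. $L(\mathbf{SYS})=\overline{L_m(\mathbf{SYS})}$. (H3) For each $p$ and each $\alpha\in\Sigma_{c,p}:=\Sigma_c\cap\Sigma_p$, there is a partial-observation local controller $\mathbf{LOC}_{\alpha,p}$ for $\alpha$ with alphabet $\Sigma_{\alpha,p}\subseteq\Sigma_p$. These satisfy $$L(\mathbf G_p)\cap\big(\mathop{\|}_{\alpha\in\Sigma_{c,p}}L(\mathbf{LOC}_{\alpha,p})\big)=L(\mathbf G_p)\cap L(\mathbf{SUP}_p),$$ $$L_m(\mathbf G_p)\cap\big(\mathop{\|}_{\alpha\in\Sigma_{c,p}}L_m(\mathbf{LOC}_{\alpha,p})\big)=L_m(\mathbf G_p)\cap L_m(\mathbf{SUP}_p).$$ Similarly, for each $q$ and each $\alpha\in\Sigma_{c,q}:=\Sigma_c\cap\Sigma_q$, there is a partial-observation local controller $\mathbf{LOC}_{\alpha,q}$ with alphabet $\Sigma_{\alpha,q}\subseteq\Sigma_q$. These satisfy $$L(\mathbf G)\cap\bigcap_{\alpha\in\Sigma_{c,q}}P_{\alpha,q}^{-1}L(\mathbf{LOC}_{\alpha,q})=L(\mathbf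 G)\cap P_q^{-1}L(\mathbf{CO}_q),$$ and the analogous identity holds with $L$ replaced by $L_m$ throughout. Here $P_{\alpha,q}:\Sigma^*\to\Sigma_{\alpha,q}^*$ is the natural projection. For each $\alpha\in\Sigma_c$, let $\mathbf{LOC}_\alpha$, with alphabet $\Sigma_\alpha$, be the synchronous product of all $\mathbf{LOC}_{\alpha,p}$ (over $p$ with $\alpha\in\Sigma_p$) and all $\mathbf{LOC}_{\alpha,q}$ (over $q$ with $\alpha\in\Sigma_q$). If there are none, $\mathbf{LOC}_\alpha$ is the one-state marked generator over $\{\alpha\}$ with an $\alpha$-selfloop. Let $P_\alpha:\Sigma^*\to\Sigma_\alpha^*$ be the natural projection, and set $$L_m(\mathbf{LOC})=\bigcap_{\alpha\in\Sigma_c}P_\alpha^{-1}L_m(\mathbf{LOC}_\alpha),\qquad L(\mathbf{LOC})=\bigcap_{\alpha\in\Sigma_c}P_\alpha^{-1}L(\mathbf{LOC}_\alpha).$$ Then each $\mathbf{LOC}_\alpha$ is a partial-observation local controller for $\alpha$, and $$L_m(\mathbf G)\cap L_m(\mathbf{LOC})\subseteq L_m(\mathbf G)\cap P_e^{-1}E,$$ $$L(\mathbf G)\cap L(\mathbf{LOC})=\overline{L_m(\mathbf G)\cap L_m(\mathbf{LOC})}.$$ Moreover, $L(\mathbf G)\cap L(\mathbf{LOC})=L(\mathbf{SYS})$ and $L_m(\mathbf G)\cap L_m(\mathbf{LOC})=L_m(\mathbf{SYS})$.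
   Context: Generators and languages. A generator $\mathbf G=(Q,\Sigma,\delta,q_0,Q_m)$ is a finite automaton with partial transition function $\delta$. Its closed behavior is $L(\mathbf G)=\{s\in\Sigma^*:\delta(q_0,s)\text{ defined}\}$ and its marked behavior is $L_m(\mathbf G)=\{s\in L(\mathbf G):\delta(q_0,s)\in Q_m\}$. An overbar denotes prefix closure. Projections and synchronous product. For $\Sigma'\subseteq\Sigma$, the natural projection $\Sigma^*\to\Sigma'^*$ erases the events not in $\Sigma'$, and $P^{-1}$ denotes its inverse image. The synchronous product of languages $L_i\subseteq\Sigma_i^*$ is $\bigcap_i P_i^{-1}L_i$ over $\bigcup_i\Sigma_i$. The synchronous product of generators is the generator realizing the synchronous product of both closed and marked behaviors. Controllability. $\Sigma_c$ and $\Sigma_{uc}$ are the controllable and uncontrollable events. A language $K\subseteq L_m(\mathbf G)$ is controllable if $\overline K\Sigma_{uc}\cap L(\mathbf G)\subseteq\overline K$. Relative observability. $\Sigma_o$ and $\Sigma_{uo}$ are the observable and unobservable events, and $P:\Sigma^*\to\Sigma_o^*$ is the natural projection. Given $C\subseteq L_m(\mathbf G)$, a language $K\subseteq C$ is $C$-observable if, for all $s,s'$ with $P(s)=P(s')$, both of the following hold: (i) for all $\sigma\in\Sigma$: if $s\sigma\in\overline K$, $s'\in\overline C$ and $s'\sigma\in L(\mathbf G)$, then $s'\sigma\in\overline K$; (ii) if $s\in K$ and $s'\in\overline C\cap L_m(\mathbf G)$, then $s'\in K$. $\sup\mathcal{CO}(F)$ denotes the supremal controllable and $C$-observable sublanguage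 of $F$. Local controllers. A partial-observation local controller for $\alpha\in\Sigma_c$ is a generator $\mathbf{LOC}_\alpha=(Y_\alpha,\Sigma_\alpha,\eta_\alpha,y_{0,\alpha},Y_{m,\alpha})$ satisfying: (i) $\Sigma_\alpha\subseteq\Sigma_o\cup\{\alpha\}$, and it enables/disables only $\alpha$; (ii) every transition labelled by an unobservable event is a selfloop, i.e. for all $y$ and all $\sigma\in\Sigma_{uo}$, if $\eta_\alpha(y,\sigma)$ is defined then $\eta_\alpha(y,\sigma)=y$. *)

theory Defs
  imports Main "HOL-Library.FuncSet"
begin

text \<open>Strings over the (finite) alphabet are lists; the full alphabet Sigma is the
  universe of a finite event type.\<close>

definition pre :: "'e list set \<Rightarrow> 'e list set" where
  "pre L = {s. \<exists>t. s @ t \<in> L}"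

definition proj :: "'e set \<Rightarrow> 'e list \<Rightarrow> 'e list" where
  "proj A s = filter (\<lambda>x. x \<in> A) s"

definition invp :: "'e set \<Rightarrow> 'e list set \<Rightarrow> 'e list set" where
  "invp A L = {s. proj A s \<in> L}"

definition syncL :: "'i set \<Rightarrow> ('i \<Rightarrow> 'e set) \<Rightarrow> ('i \<Rightarrow> 'e list set) \<Rightarrow> 'e list set" where
  "syncL I A L = {s \<in> lists (\<Union>i\<in>I. A i). \<forall>i\<in>I. proj (A i) s \<in> L i}"

definition sync2 :: "'e set \<Rightarrow> 'e list set \<Rightarrow> 'e set \<Rightarrow> 'e list set \<Rightarrow> 'e list set" where
  "sync2 A L1 B L2 = {s \<in> lists (A \<union> B). proj A s \<in> L1 \<and> proj B s \<in> L2}"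

record ('q, 'e) gen =
  states :: "'q set"
  alph   :: "'e set"
  trans  :: "'q \<Rightarrow> 'e \<Rightarrow> 'q option"
  init   :: "'q"
  marked :: "'q set"

definition wf_gen :: "('q, 'e) gen \<Rightarrow> bool" where
  "wf_gen g \<longleftrightarrow> finite (states g) \<and> finite (alph g) \<and> init g \<in> states g \<and>
     marked g \<subseteq> states g \<and>
     (\<forall>q e q'. trans g q e = Some q' \<longrightarrow> q \<in> states g \<and> e \<in> alph g \<and> q' \<in> states g)"

fun run :: "('q, 'e) gen \<Rightarrow> 'q \<Rightarrow> 'e list \<Rightarrow> 'q option" where
  "run g q [] = Some q"
| "run g q (e # s) = (case trans g q e of None \<Rightarrow> None | Some q' \<Rightarrow> run g q' s)"

definition Lc :: "('q, 'e) gen \<Rightarrow> 'e list set" where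
  "Lc g = {s. run g (init g) s \<noteq> None}"

definition Lm :: "('q, 'e) gen \<Rightarrow> 'e list set" where
  "Lm g = {s. \<exists>q. run g (init g) s = Some q \<and> q \<in> marked g}"

definition gprod :: "'i set \<Rightarrow> ('i \<Rightarrow> ('q, 'e) gen) \<Rightarrow> ('i \<Rightarrow> 'q, 'e) gen" where
  "gprod I G = \<lparr> states = (\<Pi>\<^sub>E i\<in>I. states (G i)),
     alph = (\<Union>i\<in>I. alph (G i)),
     trans = (\<lambda>x e. if e \<in> (\<Union>i\<in>I. alph (G i)) \<and> x \<in> (\<Pi>\<^sub>E i\<in>I. states (G i)) \<and>
                       (\<forall>i\<in>I. e \<in> alph (G i) \<longrightarrow> trans (G i) (x i) e \<noteq> None)
                     then Some (\<lambda>i. if i \<in> I \<and> e \<in> alph (G i)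
                                    then the (trans (G i) (x i) e) else x i)
                     else None),
     init = (\<lambda>i\<in>I. init (G i)),
     marked = (\<Pi>\<^sub>E i\<in>I. marked (G i)) \<rparr>"

definition selfloop_gen :: "'e \<Rightarrow> ('i \<Rightarrow> 'q, 'e) gen" where
  "selfloop_gen a = \<lparr> states = {(\<lambda>_. undefined)}, alph = {a},
     trans = (\<lambda>x e. if x = (\<lambda>_. undefined) \<and> e = a then Some x else None),
     init = (\<lambda>_. undefined), marked = {(\<lambda>_. undefined)} \<rparr>"

definition controllable :: "'e list set \<Rightarrow> 'e set \<Rightarrow> 'e list set \<Rightarrow> bool" where
  "controllable L Sc K \<longleftrightarrow>
     (\<forall>s \<sigma>. s \<in> pre K \<and> \<sigma> \<notin> Sc \<and> s @ [\<sigma>] \<in> L \<longrightarrow> s @ [\<sigma>] \<in> pre K)"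

definition rel_observable ::
  "'e list set \<Rightarrow> 'e list set \<Rightarrow> 'e set \<Rightarrow> 'e list set \<Rightarrow> 'e list set \<Rightarrow> bool" where
  "rel_observable L LmG So C K \<longleftrightarrow> K \<subseteq> C \<and>
     (\<forall>s s'. proj So s = proj So s' \<longrightarrow>
        (\<forall>\<sigma>. s @ [\<sigma>] \<in> pre K \<and> s' \<in> pre C \<and> s' @ [\<sigma>] \<in> L \<longrightarrow> s' @ [\<sigma>] \<in> pre K) \<and>
        (s \<in> K \<and> s' \<in> pre C \<inter> LmG \<longrightarrow> s' \<in> K))"

definition supCO ::
  "'e list set \<Rightarrow> 'e list set \<Rightarrow> 'e set \<Rightarrow> 'e set \<Rightarrow> 'e list set \<Rightarrow> 'e list set" where
  "supCO L LmG Sc So F = \<Union>{K. K \<subseteq> F \<and> controllable L Sc K \<and> rel_observable L LmG So F K}"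

definition is_local_controller :: "'e set \<Rightarrow> 'e \<Rightarrow> ('q, 'e) gen \<Rightarrow> bool" where
  "is_local_controller So a g \<longleftrightarrow> wf_gen g \<and> alph g \<subseteq> So \<union> {a} \<and>
     (\<forall>y \<sigma>. \<sigma> \<notin> So \<and> trans g y \<sigma> \<noteq> None \<longrightarrow> trans g y \<sigma> = Some y)"

definition Gsub :: "nat \<Rightarrow> (nat \<Rightarrow> ('q, 'e) gen) \<Rightarrow> 'e set \<Rightarrow> (nat \<Rightarrow> 'q, 'e) gen" where
  "Gsub N Gk Se = gprod {k \<in> {1..N}. alph (Gk k) \<inter> Se \<noteq> {}} Gk"

definition LOCalpha ::
  "'p set \<Rightarrow> ('p \<Rightarrow> 'e set) \<Rightarrow> 'c set \<Rightarrow> ('c \<Rightarrow> 'e set) \<Rightarrow>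
   ('e \<Rightarrow> 'p \<Rightarrow> ('q, 'e) gen) \<Rightarrow> ('e \<Rightarrow> 'c \<Rightarrow> ('q, 'e) gen) \<Rightarrow> 'e \<Rightarrow> ('p + 'c \<Rightarrow> 'q, 'e) gen" where
  "LOCalpha P Sp Q Sq LOCp LOCq a =
     (let I = Inl ` {p \<in> P. a \<in> Sp p} \<union> Inr ` {q \<in> Q. a \<in> Sq q}
      in if I = {} then selfloop_gen a else gprod I (case_sum (LOCp a) (LOCq a)))"

end

theory Submission
  imports Defs
begin

lemma proj_proj: "proj A (proj B s) = proj (A \<inter> B) s"
  by (simp add: proj_def conj_commute)

lemma proj_sub: "A \<subseteq> B \<Longrightarrow> proj A (proj B s) = proj A s"
  by (simp add: proj_proj Int_absorb2)

lemma proj_lists: "proj A s \<in> lists A"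
  by (auto simp: proj_def)

lemma proj_Cons: "proj A (e # s) = (if e \<in> A then e # proj A s else proj A s)"
  by (simp add: proj_def)

lemma Lm_sub_Lc: "Lm g \<subseteq> Lc g"
  by (auto simp: Lm_def Lc_def)

lemma run_gprod:
  assumes wf: "\<forall>i\<in>I. wf_gen (G i)" and x: "x \<in> (\<Pi>\<^sub>E i\<in>I. states (G i))"
  shows "run (gprod I G) x s = Some y \<longleftrightarrow> set s \<subseteq> (\<Union>i\<in>I. alph (G i)) \<and> y \<in> extensional I \<and>
     (\<forall>i\<in>I. run (G i) (x i) (proj (alph (G i)) s) = Some (y i))"
  using x
proof (induction s arbitrary: x)
  case Nil
  then show ?case by (auto simp: proj_def PiE_def extensional_def fun_eq_iff)
next
  case (Cons e s)
  define x' where "x' = (\<lambda>i. if i \<in> I \<and> e \<in> alph (G i) then the (trans (G i) (x i) e) else x i)"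
  show ?case
  proof (cases "e \<in> (\<Union>i\<in>I. alph (G i)) \<and> (\<forall>i\<in>I. e \<in> alph (G i) \<longrightarrow> trans (G i) (x i) e \<noteq> None)")
    case True
    have tr: "trans (gprod I G) x e = Some x'"
      using True Cons.prems by (simp add: gprod_def x'_def)
    have x': "x' \<in> (\<Pi>\<^sub>E i\<in>I. states (G i))"
    proof -
      have "x' i \<in> states (G i)" if "i \<in> I" for i
      proof (cases "e \<in> alph (G i)")
        case True
        with \<open>i \<in> I\<close> \<open>e \<in> _ \<and> _\<close> obtain q where "trans (G i) (x i) e = Some q" by blast
        then show ?thesis using wf \<open>i \<in> I\<close> True unfolding x'_def wf_gen_def by auto
      next
        case False then show ?thesis using Cons.prems that by (auto simp: x'_def)
      qed
      moreover have "x' i = undefined" if "i \<notin> I" for i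
        using Cons.prems that by (auto simp: x'_def)
      ultimately show ?thesis by (auto simp: PiE_def extensional_def)
    qed
    have eq: "run (G i) (x i) (proj (alph (G i)) (e # s)) = run (G i) (x' i) (proj (alph (G i)) s)"
      if "i \<in> I" for i
    proof (cases "e \<in> alph (G i)")
      case True
      with \<open>i \<in> I\<close> \<open>e \<in> _ \<and> _\<close> obtain q where "trans (G i) (x i) e = Some q" by blast
      then show ?thesis using True that by (simp add: proj_Cons x'_def)
    next
      case False then show ?thesis by (simp add: proj_Cons x'_def)
    qed
    have "run (gprod I G) x (e # s) = run (gprod I G) x' s" using tr by simp
    then show ?thesis using Cons.IH[OF x'] eq True by auto
  next
    case False
    have tr: "trans (gprod I G) x e = None"
      using False by (simp add: gprod_def)
    have "\<not> (set (e # s) \<subseteq> (\<Union>i\<in>I. alph (G i)) \<and> y \<in> extensional I \<and>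
     (\<forall>i\<in>I. run (G i) (x i) (proj (alph (G i)) (e # s)) = Some (y i)))"
    proof
      assume h: "set (e # s) \<subseteq> (\<Union>i\<in>I. alph (G i)) \<and> y \<in> extensional I \<and>
        (\<forall>i\<in>I. run (G i) (x i) (proj (alph (G i)) (e # s)) = Some (y i))"
      with False obtain i where i: "i \<in> I" "e \<in> alph (G i)" "trans (G i) (x i) e = None" by auto
      with h show False by (auto simp: proj_Cons)
    qed
    then show ?thesis using tr by simp
  qed
qed

lemma gprod_init: "\<forall>i\<in>I. wf_gen (G i) \<Longrightarrow> init (gprod I G) \<in> (\<Pi>\<^sub>E i\<in>I. states (G i))"
  by (auto simp: gprod_def wf_gen_def)

lemma Lc_gprod:
  assumes wf: "\<forall>i\<in>I. wf_gen (G i)"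
  shows "s \<in> Lc (gprod I G) \<longleftrightarrow> set s \<subseteq> (\<Union>i\<in>I. alph (G i)) \<and>
     (\<forall>i\<in>I. proj (alph (G i)) s \<in> Lc (G i))"
proof -
  have ini: "init (gprod I G) = (\<lambda>i\<in>I. init (G i))" by (simp add: gprod_def)
  note R = run_gprod[OF wf gprod_init[OF wf], unfolded ini]
  show ?thesis
  proof
    assume "s \<in> Lc (gprod I G)"
    then obtain y where "run (gprod I G) (init (gprod I G)) s = Some y" by (auto simp: Lc_def)
    then show "set s \<subseteq> (\<Union>i\<in>I. alph (G i)) \<and> (\<forall>i\<in>I. proj (alph (G i)) s \<in> Lc (G i))"
      unfolding ini R by (auto simp: Lc_def)
  next
    assume h: "set s \<subseteq> (\<Union>i\<in>I. alph (G i)) \<and> (\<forall>i\<in>I. proj (alph (G i)) s \<in> Lc (G i))"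
    define y where "y = (\<lambda>i\<in>I. the (run (G i) (init (G i)) (proj (alph (G i)) s)))"
    have "run (gprod I G) (\<lambda>i\<in>I. init (G i)) s = Some y"
      unfolding R using h by (auto simp: y_def Lc_def)
    then show "s \<in> Lc (gprod I G)" by (simp add: Lc_def ini)
  qed
qed

lemma Lm_gprod:
  assumes wf: "\<forall>i\<in>I. wf_gen (G i)"
  shows "s \<in> Lm (gprod I G) \<longleftrightarrow> set s \<subseteq> (\<Union>i\<in>I. alph (G i)) \<and>
     (\<forall>i\<in>I. proj (alph (G i)) s \<in> Lm (G i))"
proof -
  have ini: "init (gprod I G) = (\<lambda>i\<in>I. init (G i))" by (simp add: gprod_def)
  note R = run_gprod[OF wf gprod_init[OF wf], unfolded ini]
  show ?thesis
  proof
    assume "s \<in> Lm (gprod I G)"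
    then obtain y where "run (gprod I G) (init (gprod I G)) s = Some y" "y \<in> (\<Pi>\<^sub>E i\<in>I. marked (G i))"
      by (auto simp: Lm_def gprod_def)
    then show "set s \<subseteq> (\<Union>i\<in>I. alph (G i)) \<and> (\<forall>i\<in>I. proj (alph (G i)) s \<in> Lm (G i))"
      unfolding ini R by (auto simp: Lm_def)
  next
    assume h: "set s \<subseteq> (\<Union>i\<in>I. alph (G i)) \<and> (\<forall>i\<in>I. proj (alph (G i)) s \<in> Lm (G i))"
    define y where "y = (\<lambda>i\<in>I. the (run (G i) (init (G i)) (proj (alph (G i)) s)))"
    have "run (gprod I G) (\<lambda>i\<in>I. init (G i)) s = Some y"
      unfolding R using h by (auto simp: y_def Lm_def)
    moreover have "y \<in> (\<Pi>\<^sub>E i\<in>I. marked (G i))"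
      using h by (auto simp: y_def Lm_def)
    ultimately show "s \<in> Lm (gprod I G)" by (auto simp: Lm_def ini gprod_def)
  qed
qed

lemma run_selfloop: "run (selfloop_gen a) (\<lambda>_. undefined) s = (if set s \<subseteq> {a} then Some (\<lambda>_. undefined) else None)"
  by (induction s) (auto simp: selfloop_gen_def)

lemma selfloop_init: "init (selfloop_gen a) = (\<lambda>_. undefined)"
  and selfloop_marked: "marked (selfloop_gen a) = {(\<lambda>_. undefined)}"
  by (simp_all add: selfloop_gen_def)

lemma alph_selfloop: "alph (selfloop_gen a) = {a}" by (simp add: selfloop_gen_def)

lemma Lc_selfloop: "Lc (selfloop_gen a) = lists {a}"
  unfolding Lc_def selfloop_init run_selfloop by auto

lemma Lm_selfloop: "Lm (selfloop_gen a) = lists {a}"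
  unfolding Lm_def selfloop_init run_selfloop selfloop_marked by auto

lemma lc_selfloop: "is_local_controller So a (selfloop_gen a)"
  by (auto simp: is_local_controller_def wf_gen_def selfloop_gen_def split: if_splits)

lemma lc_gprod:
  assumes fin: "finite I" and lc: "\<forall>i\<in>I. is_local_controller So a (G i)"
  shows "is_local_controller So a (gprod I G)"
proof -
  have wf: "\<forall>i\<in>I. wf_gen (G i)" using lc by (auto simp: is_local_controller_def)
  have "wf_gen (gprod I G)"
    unfolding wf_gen_def
  proof (intro conjI allI impI)
    show "finite (states (gprod I G))" using fin wf by (auto simp: gprod_def wf_gen_def intro!: finite_PiE)
    show "finite (alph (gprod I G))" using fin wf by (auto simp: gprod_def wf_gen_def)
    show "init (gprod I G) \<in> states (gprod I G)" using gprod_init[OF wf] by (simp add: gprod_def)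
    show "marked (gprod I G) \<subseteq> states (gprod I G)" using wf unfolding gprod_def wf_gen_def by (auto simp: PiE_def Pi_def) blast
    fix q e q' assume h: "trans (gprod I G) q e = Some q'"
    then have c: "e \<in> (\<Union>i\<in>I. alph (G i))" "q \<in> (\<Pi>\<^sub>E i\<in>I. states (G i))"
      "\<forall>i\<in>I. e \<in> alph (G i) \<longrightarrow> trans (G i) (q i) e \<noteq> None"
      and q': "q' = (\<lambda>i. if i \<in> I \<and> e \<in> alph (G i) then the (trans (G i) (q i) e) else q i)"
      by (auto simp: gprod_def split: if_splits)
    show "q \<in> states (gprod I G)" using c by (simp add: gprod_def)
    show "e \<in> alph (gprod I G)" using c by (simp add: gprod_def)
    have "q' i \<in> states (G i)" if "i \<in> I" for i
    proof (cases "e \<in> alph (G i)")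
      case True
      with c that obtain r where "trans (G i) (q i) e = Some r" by blast
      then show ?thesis using wf that True q' unfolding wf_gen_def by auto
    next
      case False then show ?thesis using c that q' by auto
    qed
    moreover have "q' i = undefined" if "i \<notin> I" for i using c that q' by auto
    ultimately show "q' \<in> states (gprod I G)" by (auto simp: gprod_def PiE_def extensional_def)
  qed
  moreover have "alph (gprod I G) \<subseteq> So \<union> {a}"
    using lc by (auto simp: gprod_def is_local_controller_def)
  moreover have "trans (gprod I G) y \<sigma> = Some y" if "\<sigma> \<notin> So" "trans (gprod I G) y \<sigma> \<noteq> None" for y \<sigma>
  proof -
    have c: "\<sigma> \<in> (\<Union>i\<in>I. alph (G i))" "y \<in> (\<Pi>\<^sub>E i\<in>I. states (G i))"
      "\<forall>i\<in>I. \<sigma> \<in> alph (G i) \<longrightarrow> trans (G i) (y i) \<sigma> \<noteq> None"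
      using that(2) by (auto simp: gprod_def split: if_splits)
    have "trans (G i) (y i) \<sigma> = Some (y i)" if "i \<in> I" "\<sigma> \<in> alph (G i)" for i
      using lc c that \<open>\<sigma> \<notin> So\<close> unfolding is_local_controller_def by blast
    then have "(\<lambda>i. if i \<in> I \<and> \<sigma> \<in> alph (G i) then the (trans (G i) (y i) \<sigma>) else y i) = y"
      by (auto simp: fun_eq_iff)
    then show ?thesis using c by (simp add: gprod_def)
  qed
  ultimately show ?thesis unfolding is_local_controller_def by blast
qed

theorem theorem1:
  fixes Sc So :: "'e::finite set"
    and N :: nat and Gk :: "nat \<Rightarrow> ('s1, 'e) gen"
    and P :: "'p set" and Se :: "'p \<Rightarrow> 'e set" and E :: "'p \<Rightarrow> 'e list set"
    and SUPV :: "'p \<Rightarrow> ('s2, 'e) gen"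
    and Q :: "'c set" and CO :: "'c \<Rightarrow> ('s3, 'e) gen"
    and LOCp :: "'e \<Rightarrow> 'p \<Rightarrow> ('s4, 'e) gen" and LOCq :: "'e \<Rightarrow> 'c \<Rightarrow> ('s4, 'e) gen"
  assumes plant_wf: "\<forall>k\<in>{1..N}. wf_gen (Gk k)"
    and plant_alph: "(\<Union>k\<in>{1..N}. alph (Gk k)) = UNIV"
    and P_fin: "finite P" and Q_fin: "finite Q"
    and E_alph: "\<forall>p\<in>P. E p \<subseteq> lists (Se p)"
    and Gp_alph: "\<forall>p\<in>P. Se p \<subseteq> alph (Gsub N Gk (Se p))"
    and relevant: "\<forall>k\<in>{1..N}. \<exists>p\<in>P. alph (Gk k) \<inter> Se p \<noteq> {}"
    \<comment> \<open>(H1)\<close>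
    and SUP_wf: "\<forall>p\<in>P. wf_gen (SUPV p) \<and> alph (SUPV p) = alph (Gsub N Gk (Se p))"
    and H1m: "\<forall>p\<in>P. Lm (Gsub N Gk (Se p)) \<inter> Lm (SUPV p) =
                supCO (Lc (Gsub N Gk (Se p))) (Lm (Gsub N Gk (Se p))) Sc So
                  (sync2 (Se p) (E p) (alph (Gsub N Gk (Se p))) (Lm (Gsub N Gk (Se p))))"
    and H1c: "\<forall>p\<in>P. Lc (Gsub N Gk (Se p)) \<inter> Lc (SUPV p) =
                pre (supCO (Lc (Gsub N Gk (Se p))) (Lm (Gsub N Gk (Se p))) Sc So
                  (sync2 (Se p) (E p) (alph (Gsub N Gk (Se p))) (Lm (Gsub N Gk (Se p)))))"
    \<comment> \<open>(H2)\<close>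
    and CO_wf: "\<forall>q\<in>Q. wf_gen (CO q)"
    and H2: "Lc (gprod {1..N} Gk) \<inter> (\<Inter>p\<in>P. invp (alph (SUPV p)) (Lc (SUPV p)))
               \<inter> (\<Inter>q\<in>Q. invp (alph (CO q)) (Lc (CO q)))
             = pre (Lm (gprod {1..N} Gk) \<inter> (\<Inter>p\<in>P. invp (alph (SUPV p)) (Lm (SUPV p)))
               \<inter> (\<Inter>q\<in>Q. invp (alph (CO q)) (Lm (CO q))))"
    \<comment> \<open>(H3)\<close>
    and LOCp_ctrl: "\<forall>p\<in>P. \<forall>a\<in>Sc \<inter> alph (Gsub N Gk (Se p)).
               is_local_controller So a (LOCp a p) \<and> alph (LOCp a p) \<subseteq> alph (Gsub N Gk (Se p))"
    and H3p_c: "\<forall>p\<in>P. Lc (Gsub N Gk (Se p)) \<inter>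
                 (\<Inter>a\<in>Sc \<inter> alph (Gsub N Gk (Se p)). invp (alph (LOCp a p)) (Lc (LOCp a p)))
               = Lc (Gsub N Gk (Se p)) \<inter> Lc (SUPV p)"
    and H3p_m: "\<forall>p\<in>P. Lm (Gsub N Gk (Se p)) \<inter>
                 (\<Inter>a\<in>Sc \<inter> alph (Gsub N Gk (Se p)). invp (alph (LOCp a p)) (Lm (LOCp a p)))
               = Lm (Gsub N Gk (Se p)) \<inter> Lm (SUPV p)"
    and LOCq_ctrl: "\<forall>q\<in>Q. \<forall>a\<in>Sc \<inter> alph (CO q).
               is_local_controller So a (LOCq a q) \<and> alph (LOCq a q) \<subseteq> alph (CO q)"
    and H3q_c: "\<forall>q\<in>Q. Lc (gprod {1..N} Gk) \<inter>
                 (\<Inter>a\<in>Sc \<inter> alph (CO q). invp (alph (LOCq a q)) (Lc (LOCq a q)))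
               = Lc (gprod {1..N} Gk) \<inter> invp (alph (CO q)) (Lc (CO q))"
    and H3q_m: "\<forall>q\<in>Q. Lm (gprod {1..N} Gk) \<inter>
                 (\<Inter>a\<in>Sc \<inter> alph (CO q). invp (alph (LOCq a q)) (Lm (LOCq a q)))
               = Lm (gprod {1..N} Gk) \<inter> invp (alph (CO q)) (Lm (CO q))"
  shows "(\<forall>a\<in>Sc. is_local_controller So a
              (LOCalpha P (\<lambda>p. alph (Gsub N Gk (Se p))) Q (\<lambda>q. alph (CO q)) LOCp LOCq a))
    \<and> Lm (gprod {1..N} Gk) \<inter>
        (\<Inter>a\<in>Sc. invp (alph (LOCalpha P (\<lambda>p. alph (Gsub N Gk (Se p))) Q (\<lambda>q. alph (CO q)) LOCp LOCq a))
                      (Lm (LOCalpha P (\<lambda>p. alph (Gsub N Gk (Se p))) Q (\<lambda>q. alph (CO q)) LOCp LOCq a)))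
      \<subseteq> Lm (gprod {1..N} Gk) \<inter> invp (\<Union>p\<in>P. Se p) (syncL P Se E)
    \<and> Lc (gprod {1..N} Gk) \<inter>
        (\<Inter>a\<in>Sc. invp (alph (LOCalpha P (\<lambda>p. alph (Gsub N Gk (Se p))) Q (\<lambda>q. alph (CO q)) LOCp LOCq a))
                      (Lc (LOCalpha P (\<lambda>p. alph (Gsub N Gk (Se p))) Q (\<lambda>q. alph (CO q)) LOCp LOCq a)))
      = pre (Lm (gprod {1..N} Gk) \<inter>
        (\<Inter>a\<in>Sc. invp (alph (LOCalpha P (\<lambda>p. alph (Gsub N Gk (Se p))) Q (\<lambda>q. alph (CO q)) LOCp LOCq a))
                      (Lm (LOCalpha P (\<lambda>p. alph (Gsub N Gk (Se p))) Q (\<lambda>q. alph (CO q)) LOCp LOCq a))))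
    \<and> Lc (gprod {1..N} Gk) \<inter>
        (\<Inter>a\<in>Sc. invp (alph (LOCalpha P (\<lambda>p. alph (Gsub N Gk (Se p))) Q (\<lambda>q. alph (CO q)) LOCp LOCq a))
                      (Lc (LOCalpha P (\<lambda>p. alph (Gsub N Gk (Se p))) Q (\<lambda>q. alph (CO q)) LOCp LOCq a)))
      = Lc (gprod {1..N} Gk) \<inter> (\<Inter>p\<in>P. invp (alph (SUPV p)) (Lc (SUPV p)))
               \<inter> (\<Inter>q\<in>Q. invp (alph (CO q)) (Lc (CO q)))
    \<and> Lm (gprod {1..N} Gk) \<inter>
        (\<Inter>a\<in>Sc. invp (alph (LOCalpha P (\<lambda>p. alph (Gsub N Gk (Se p))) Q (\<lambda>q. alph (CO q)) LOCp LOCq a))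
                      (Lm (LOCalpha P (\<lambda>p. alph (Gsub N Gk (Se p))) Q (\<lambda>q. alph (CO q)) LOCp LOCq a)))
      = Lm (gprod {1..N} Gk) \<inter> (\<Inter>p\<in>P. invp (alph (SUPV p)) (Lm (SUPV p)))
               \<inter> (\<Inter>q\<in>Q. invp (alph (CO q)) (Lm (CO q)))"
proof -
  define G where "G = gprod {1..N} Gk"
  define LA where "LA = LOCalpha P (\<lambda>p. alph (Gsub N Gk (Se p))) Q (\<lambda>q. alph (CO q)) LOCp LOCq"
  define Sp where "Sp p = alph (Gsub N Gk (Se p))" for p
  define Kp where "Kp p = {k \<in> {1..N}. alph (Gk k) \<inter> Se p \<noteq> {}}" for p
  have Gsub_eq: "Gsub N Gk (Se p) = gprod (Kp p) Gk" for p by (simp add: Gsub_def Kp_def)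
  have Sp_eq: "Sp p = (\<Union>k\<in>Kp p. alph (Gk k))" for p by (simp add: Sp_def Gsub_eq gprod_def)
  have wfK: "\<forall>k\<in>Kp p. wf_gen (Gk k)" for p using plant_wf by (auto simp: Kp_def)
  have F1: "s \<in> Lc G \<longleftrightarrow> (\<forall>k\<in>{1..N}. proj (alph (Gk k)) s \<in> Lc (Gk k))" for s
    unfolding G_def Lc_gprod[OF plant_wf] plant_alph by simp
  have F1m: "s \<in> Lm G \<longleftrightarrow> (\<forall>k\<in>{1..N}. proj (alph (Gk k)) s \<in> Lm (Gk k))" for s
    unfolding G_def Lm_gprod[OF plant_wf] plant_alph by simp
  have F2: "proj (Sp p) s \<in> Lc (Gsub N Gk (Se p)) \<longleftrightarrow> (\<forall>k\<in>Kp p. proj (alph (Gk k)) s \<in> Lc (Gk k))" for p s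
  proof -
    have "proj (alph (Gk k)) (proj (Sp p) s) = proj (alph (Gk k)) s" if "k \<in> Kp p" for k
      using that by (intro proj_sub) (auto simp: Sp_eq)
    moreover have "set (proj (Sp p) s) \<subseteq> (\<Union>k\<in>Kp p. alph (Gk k))"
      by (auto simp: proj_def Sp_eq)
    ultimately show ?thesis unfolding Gsub_eq Lc_gprod[OF wfK] by auto
  qed
  have F2m: "proj (Sp p) s \<in> Lm (Gsub N Gk (Se p)) \<longleftrightarrow> (\<forall>k\<in>Kp p. proj (alph (Gk k)) s \<in> Lm (Gk k))" for p s
  proof -
    have "proj (alph (Gk k)) (proj (Sp p) s) = proj (alph (Gk k)) s" if "k \<in> Kp p" for k
      using that by (intro proj_sub) (auto simp: Sp_eq)
    moreover have "set (proj (Sp p) s) \<subseteq> (\<Union>k\<in>Kp p. alph (Gk k))"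
      by (auto simp: proj_def Sp_eq)
    ultimately show ?thesis unfolding Gsub_eq Lm_gprod[OF wfK] by auto
  qed
  have KU: "(\<Union>p\<in>P. Kp p) = {1..N}" using relevant by (auto simp: Kp_def)
  have F3: "s \<in> Lc G \<longleftrightarrow> (\<forall>p\<in>P. proj (Sp p) s \<in> Lc (Gsub N Gk (Se p)))" for s
    unfolding F1 F2 using KU by blast
  have F3m: "s \<in> Lm G \<longleftrightarrow> (\<forall>p\<in>P. proj (Sp p) s \<in> Lm (Gsub N Gk (Se p)))" for s
    unfolding F1m F2m using KU by blast
  have F4: "s \<in> invp (alph (LA a)) (Lc (LA a)) \<longleftrightarrow>
      (\<forall>p\<in>P. a \<in> Sp p \<longrightarrow> proj (alph (LOCp a p)) s \<in> Lc (LOCp a p)) \<and>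
      (\<forall>q\<in>Q. a \<in> alph (CO q) \<longrightarrow> proj (alph (LOCq a q)) s \<in> Lc (LOCq a q))"
    and F4m: "s \<in> invp (alph (LA a)) (Lm (LA a)) \<longleftrightarrow>
      (\<forall>p\<in>P. a \<in> Sp p \<longrightarrow> proj (alph (LOCp a p)) s \<in> Lm (LOCp a p)) \<and>
      (\<forall>q\<in>Q. a \<in> alph (CO q) \<longrightarrow> proj (alph (LOCq a q)) s \<in> Lm (LOCq a q))"
    if a: "a \<in> Sc" for a s
  proof -
    define I where "I = Inl ` {p \<in> P. a \<in> Sp p} \<union> Inr ` {q \<in> Q. a \<in> alph (CO q)}"
    define H where "H = case_sum (LOCp a) (LOCq a)"
    have LAe: "LA a = (if I = {} then selfloop_gen a else gprod I H)"
      unfolding LA_def LOCalpha_def I_def H_def Sp_def Let_def by (rule refl)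
    have "(s \<in> invp (alph (LA a)) (Lc (LA a)) \<longleftrightarrow> (\<forall>i\<in>I. proj (alph (H i)) s \<in> Lc (H i))) \<and>
          (s \<in> invp (alph (LA a)) (Lm (LA a)) \<longleftrightarrow> (\<forall>i\<in>I. proj (alph (H i)) s \<in> Lm (H i)))"
    proof (cases "I = {}")
      case True
      then show ?thesis using LAe by (simp add: invp_def Lc_selfloop Lm_selfloop proj_lists alph_selfloop)
    next
      case False
      have wfH: "\<forall>i\<in>I. wf_gen (H i)"
        using LOCp_ctrl LOCq_ctrl a by (auto simp: I_def H_def Sp_def is_local_controller_def)
      have pe: "proj (alph (H i)) (proj (alph (LA a)) s) = proj (alph (H i)) s" if "i \<in> I" for i
        using False that by (intro proj_sub) (auto simp: LAe gprod_def)
      have st: "set (proj (alph (LA a)) s) \<subseteq> (\<Union>i\<in>I. alph (H i))"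
        using False by (auto simp: LAe gprod_def proj_def)
      show ?thesis using False pe st
        unfolding invp_def LAe by (simp add: Lc_gprod[OF wfH] Lm_gprod[OF wfH])
    qed
    note both = this
    have aux: "(\<forall>i\<in>I. X i) \<longleftrightarrow> (\<forall>p\<in>P. a \<in> Sp p \<longrightarrow> X (Inl p)) \<and> (\<forall>q\<in>Q. a \<in> alph (CO q) \<longrightarrow> X (Inr q))" for X
      by (auto simp: I_def)
    show "s \<in> invp (alph (LA a)) (Lc (LA a)) \<longleftrightarrow>
      (\<forall>p\<in>P. a \<in> Sp p \<longrightarrow> proj (alph (LOCp a p)) s \<in> Lc (LOCp a p)) \<and>
      (\<forall>q\<in>Q. a \<in> alph (CO q) \<longrightarrow> proj (alph (LOCq a q)) s \<in> Lc (LOCq a q))"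
      using both aux[of "\<lambda>i. proj (alph (H i)) s \<in> Lc (H i)"] by (simp add: H_def)
    show "s \<in> invp (alph (LA a)) (Lm (LA a)) \<longleftrightarrow>
      (\<forall>p\<in>P. a \<in> Sp p \<longrightarrow> proj (alph (LOCp a p)) s \<in> Lm (LOCp a p)) \<and>
      (\<forall>q\<in>Q. a \<in> alph (CO q) \<longrightarrow> proj (alph (LOCq a q)) s \<in> Lm (LOCq a q))"
      using both aux[of "\<lambda>i. proj (alph (H i)) s \<in> Lm (H i)"] by (simp add: H_def)
  qed
  have locsub: "alph (LOCp a p) \<subseteq> Sp p" if "p \<in> P" "a \<in> Sc \<inter> Sp p" for a p
    using LOCp_ctrl that by (auto simp: Sp_def)
  have F5: "(\<forall>a\<in>Sc \<inter> Sp p. proj (alph (LOCp a p)) s \<in> Lc (LOCp a p)) \<longleftrightarrow> s \<in> invp (alph (SUPV p)) (Lc (SUPV p))"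
    if p: "p \<in> P" and g: "proj (Sp p) s \<in> Lc (Gsub N Gk (Se p))" for p s
  proof -
    have "proj (Sp p) s \<in> Lc (Gsub N Gk (Se p)) \<inter>
                 (\<Inter>a\<in>Sc \<inter> alph (Gsub N Gk (Se p)). invp (alph (LOCp a p)) (Lc (LOCp a p)))
        \<longleftrightarrow> proj (Sp p) s \<in> Lc (Gsub N Gk (Se p)) \<inter> Lc (SUPV p)"
      using H3p_c p by auto
    moreover have "proj (alph (LOCp a p)) (proj (Sp p) s) = proj (alph (LOCp a p)) s" if "a \<in> Sc \<inter> Sp p" for a
      using locsub[OF p that] by (rule proj_sub)
    moreover have "alph (SUPV p) = Sp p" using SUP_wf p by (simp add: Sp_def)
    ultimately show ?thesis using g by (simp add: invp_def Sp_def)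
  qed
  have F5m: "(\<forall>a\<in>Sc \<inter> Sp p. proj (alph (LOCp a p)) s \<in> Lm (LOCp a p)) \<longleftrightarrow> s \<in> invp (alph (SUPV p)) (Lm (SUPV p))"
    if p: "p \<in> P" and g: "proj (Sp p) s \<in> Lm (Gsub N Gk (Se p))" for p s
  proof -
    have "proj (Sp p) s \<in> Lm (Gsub N Gk (Se p)) \<inter>
                 (\<Inter>a\<in>Sc \<inter> alph (Gsub N Gk (Se p)). invp (alph (LOCp a p)) (Lm (LOCp a p)))
        \<longleftrightarrow> proj (Sp p) s \<in> Lm (Gsub N Gk (Se p)) \<inter> Lm (SUPV p)"
      using H3p_m p by auto
    moreover have "proj (alph (LOCp a p)) (proj (Sp p) s) = proj (alph (LOCp a p)) s" if "a \<in> Sc \<inter> Sp p" for a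
      using locsub[OF p that] by (rule proj_sub)
    moreover have "alph (SUPV p) = Sp p" using SUP_wf p by (simp add: Sp_def)
    ultimately show ?thesis using g by (simp add: invp_def Sp_def)
  qed
  have F6: "(\<forall>a\<in>Sc \<inter> alph (CO q). proj (alph (LOCq a q)) s \<in> Lc (LOCq a q)) \<longleftrightarrow> s \<in> invp (alph (CO q)) (Lc (CO q))"
    if q: "q \<in> Q" and g: "s \<in> Lc G" for q s
  proof -
    have "s \<in> Lc G \<inter> (\<Inter>a\<in>Sc \<inter> alph (CO q). invp (alph (LOCq a q)) (Lc (LOCq a q)))
       \<longleftrightarrow> s \<in> Lc G \<inter> invp (alph (CO q)) (Lc (CO q))"
      using H3q_c q unfolding G_def by auto
    then show ?thesis using g by (simp add: invp_def)
  qed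
  have F6m: "(\<forall>a\<in>Sc \<inter> alph (CO q). proj (alph (LOCq a q)) s \<in> Lm (LOCq a q)) \<longleftrightarrow> s \<in> invp (alph (CO q)) (Lm (CO q))"
    if q: "q \<in> Q" and g: "s \<in> Lm G" for q s
  proof -
    have "s \<in> Lm G \<inter> (\<Inter>a\<in>Sc \<inter> alph (CO q). invp (alph (LOCq a q)) (Lm (LOCq a q)))
       \<longleftrightarrow> s \<in> Lm G \<inter> invp (alph (CO q)) (Lm (CO q))"
      using H3q_m q unfolding G_def by auto
    then show ?thesis using g by (simp add: invp_def)
  qed
  have LOCc: "s \<in> (\<Inter>a\<in>Sc. invp (alph (LA a)) (Lc (LA a))) \<longleftrightarrow>
     (\<forall>p\<in>P. \<forall>a\<in>Sc \<inter> Sp p. proj (alph (LOCp a p)) s \<in> Lc (LOCp a p)) \<and>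
     (\<forall>q\<in>Q. \<forall>a\<in>Sc \<inter> alph (CO q). proj (alph (LOCq a q)) s \<in> Lc (LOCq a q))" for s
  proof -
    have "s \<in> (\<Inter>a\<in>Sc. invp (alph (LA a)) (Lc (LA a))) \<longleftrightarrow> (\<forall>a\<in>Sc.
      (\<forall>p\<in>P. a \<in> Sp p \<longrightarrow> proj (alph (LOCp a p)) s \<in> Lc (LOCp a p)) \<and>
      (\<forall>q\<in>Q. a \<in> alph (CO q) \<longrightarrow> proj (alph (LOCq a q)) s \<in> Lc (LOCq a q)))"
      using F4 by simp
    then show ?thesis by auto
  qed
  have LOCm: "s \<in> (\<Inter>a\<in>Sc. invp (alph (LA a)) (Lm (LA a))) \<longleftrightarrow>
     (\<forall>p\<in>P. \<forall>a\<in>Sc \<inter> Sp p. proj (alph (LOCp a p)) s \<in> Lm (LOCp a p)) \<and>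
     (\<forall>q\<in>Q. \<forall>a\<in>Sc \<inter> alph (CO q). proj (alph (LOCq a q)) s \<in> Lm (LOCq a q))" for s
  proof -
    have "s \<in> (\<Inter>a\<in>Sc. invp (alph (LA a)) (Lm (LA a))) \<longleftrightarrow> (\<forall>a\<in>Sc.
      (\<forall>p\<in>P. a \<in> Sp p \<longrightarrow> proj (alph (LOCp a p)) s \<in> Lm (LOCp a p)) \<and>
      (\<forall>q\<in>Q. a \<in> alph (CO q) \<longrightarrow> proj (alph (LOCq a q)) s \<in> Lm (LOCq a q)))"
      using F4m by simp
    then show ?thesis by auto
  qed
  have EQc: "Lc G \<inter> (\<Inter>a\<in>Sc. invp (alph (LA a)) (Lc (LA a))) =
     Lc G \<inter> (\<Inter>p\<in>P. invp (alph (SUPV p)) (Lc (SUPV p))) \<inter> (\<Inter>q\<in>Q. invp (alph (CO q)) (Lc (CO q)))"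
  proof (intro set_eqI)
    fix s
    show "s \<in> Lc G \<inter> (\<Inter>a\<in>Sc. invp (alph (LA a)) (Lc (LA a))) \<longleftrightarrow>
      s \<in> Lc G \<inter> (\<Inter>p\<in>P. invp (alph (SUPV p)) (Lc (SUPV p))) \<inter> (\<Inter>q\<in>Q. invp (alph (CO q)) (Lc (CO q)))"
    proof (cases "s \<in> Lc G")
      case True
      have e1: "(\<forall>p\<in>P. \<forall>a\<in>Sc \<inter> Sp p. proj (alph (LOCp a p)) s \<in> Lc (LOCp a p)) \<longleftrightarrow>
          (\<forall>p\<in>P. s \<in> invp (alph (SUPV p)) (Lc (SUPV p)))"
        proof -
          have gp: "\<forall>p\<in>P. proj (Sp p) s \<in> Lc (Gsub N Gk (Se p))" using True F3 by blast
          then show ?thesis by (simp add: F5)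
        qed
      have e2: "(\<forall>q\<in>Q. \<forall>a\<in>Sc \<inter> alph (CO q). proj (alph (LOCq a q)) s \<in> Lc (LOCq a q)) \<longleftrightarrow>
          (\<forall>q\<in>Q. s \<in> invp (alph (CO q)) (Lc (CO q)))"
        using True by (simp add: F6)
      show ?thesis using True LOCc[of s] e1 e2 by simp
    next
      case False then show ?thesis by simp
    qed
  qed
  have EQm: "Lm G \<inter> (\<Inter>a\<in>Sc. invp (alph (LA a)) (Lm (LA a))) =
     Lm G \<inter> (\<Inter>p\<in>P. invp (alph (SUPV p)) (Lm (SUPV p))) \<inter> (\<Inter>q\<in>Q. invp (alph (CO q)) (Lm (CO q)))"
  proof (intro set_eqI)
    fix s
    show "s \<in> Lm G \<inter> (\<Inter>a\<in>Sc. invp (alph (LA a)) (Lm (LA a))) \<longleftrightarrow>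
      s \<in> Lm G \<inter> (\<Inter>p\<in>P. invp (alph (SUPV p)) (Lm (SUPV p))) \<inter> (\<Inter>q\<in>Q. invp (alph (CO q)) (Lm (CO q)))"
    proof (cases "s \<in> Lm G")
      case True
      have e1: "(\<forall>p\<in>P. \<forall>a\<in>Sc \<inter> Sp p. proj (alph (LOCp a p)) s \<in> Lm (LOCp a p)) \<longleftrightarrow>
          (\<forall>p\<in>P. s \<in> invp (alph (SUPV p)) (Lm (SUPV p)))"
        proof -
          have gp: "\<forall>p\<in>P. proj (Sp p) s \<in> Lm (Gsub N Gk (Se p))" using True F3m by blast
          then show ?thesis by (simp add: F5m)
        qed
      have e2: "(\<forall>q\<in>Q. \<forall>a\<in>Sc \<inter> alph (CO q). proj (alph (LOCq a q)) s \<in> Lm (LOCq a q)) \<longleftrightarrow>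
          (\<forall>q\<in>Q. s \<in> invp (alph (CO q)) (Lm (CO q)))"
        using True by (simp add: F6m)
      show ?thesis using True LOCm[of s] e1 e2 by simp
    next
      case False then show ?thesis by simp
    qed
  qed
  have LC: "\<forall>a\<in>Sc. is_local_controller So a (LA a)"
  proof
    fix a assume a: "a \<in> Sc"
    define I where "I = Inl ` {p \<in> P. a \<in> Sp p} \<union> Inr ` {q \<in> Q. a \<in> alph (CO q)}"
    define H where "H = case_sum (LOCp a) (LOCq a)"
    have LAe: "LA a = (if I = {} then selfloop_gen a else gprod I H)"
      unfolding LA_def LOCalpha_def I_def H_def Sp_def Let_def by (rule refl)
    have f: "finite I" using P_fin Q_fin by (simp add: I_def)
    have l: "\<forall>i\<in>I. is_local_controller So a (H i)"
      using LOCp_ctrl LOCq_ctrl a by (auto simp: I_def H_def Sp_def)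
    show "is_local_controller So a (LA a)"
      unfolding LAe using lc_gprod[OF f l] lc_selfloop[of So a] by (cases "I = {}") simp_all
  qed
  have SUB: "Lm G \<inter> (\<Inter>a\<in>Sc. invp (alph (LA a)) (Lm (LA a))) \<subseteq> Lm G \<inter> invp (\<Union>p\<in>P. Se p) (syncL P Se E)"
  proof
    fix s assume s: "s \<in> Lm G \<inter> (\<Inter>a\<in>Sc. invp (alph (LA a)) (Lm (LA a)))"
    have "proj (Se p) s \<in> E p" if p: "p \<in> P" for p
    proof -
      have "proj (Sp p) s \<in> Lm (Gsub N Gk (Se p)) \<inter> Lm (SUPV p)"
        using s EQm F3m p SUP_wf by (auto simp: invp_def Sp_def)
      then have "proj (Sp p) s \<in> sync2 (Se p) (E p) (Sp p) (Lm (Gsub N Gk (Se p)))"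
        using H1m p by (auto simp: supCO_def Sp_def)
      then have "proj (Se p) (proj (Sp p) s) \<in> E p" by (simp add: sync2_def)
      moreover have "Se p \<subseteq> Sp p" using Gp_alph p by (simp add: Sp_def)
      ultimately show ?thesis by (simp add: proj_sub)
    qed
    moreover have "proj (Se p) (proj (\<Union>p\<in>P. Se p) s) = proj (Se p) s" if "p \<in> P" for p
      using that by (intro proj_sub) auto
    ultimately have "proj (\<Union>p\<in>P. Se p) s \<in> syncL P Se E"
      by (auto simp: syncL_def proj_lists)
    then show "s \<in> Lm G \<inter> invp (\<Union>p\<in>P. Se p) (syncL P Se E)" using s by (simp add: invp_def)
  qed
  have NB: "Lc G \<inter> (\<Inter>a\<in>Sc. invp (alph (LA a)) (Lc (LA a))) = pre (Lm G \<inter> (\<Inter>a\<in>Sc. invp (alph (LA a)) (Lm (LA a))))"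
    unfolding EQc EQm using H2 by (simp add: G_def)
  show ?thesis
    unfolding G_def[symmetric] LA_def[symmetric]
    by (intro conjI LC SUB NB EQc EQm)
qed

end
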